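(* For every integer $n\geq 2$, the graph $\mathcal{G}^3_n$ is transmission irregular, and its set of vertex transmissions equals $\{n^2+5n+10,\, n^2+5n+11,\,\dots,\, n^2+7n+16\}\cup\{n^2+8n+15\}$.
   Context: Let $G_3$ be the (disconnected) graph with vertices $a,b,c,d,e,f,g,h$ and edges $ab,ac,bc,de,dg,ef,eh,gh$. For an integer $n\ge1$, $\mathcal{G}^3_n$ is obtained from $G_3$ by adding a new path from $b$ to $d$ with $n$ new internal vertices and a new path from $c$ to $e$ with $n$ new internal vertices (each such path has length $n+1$). The transmission of a vertex $u$ in a connected graph $G$ is $Tr_G(u)=\sum_{v}d_G(u,v)$; a graph is transmission irregular if no two of its vertices have equal transmission. *)

theory Defs
  imports Main
begin

fun is_walk :: "'a set set \<Rightarrow> 'a list \<Rightarrow> bool" where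
  "is_walk E [] = False"
| "is_walk E [x] = True"
| "is_walk E (x # y # rest) = ({x, y} \<in> E \<and> is_walk E (y # rest))"

definition gdist :: "'a set \<Rightarrow> 'a set set \<Rightarrow> 'a \<Rightarrow> 'a \<Rightarrow> nat" where
  "gdist V E u v = (LEAST k. \<exists>p. is_walk E p \<and> set p \<subseteq> V \<and> hd p = u \<and> last p = v
                              \<and> length p = Suc k)"

definition transmission :: "'a set \<Rightarrow> 'a set set \<Rightarrow> 'a \<Rightarrow> nat" where
  "transmission V E u = (\<Sum>v\<in>V. gdist V E u v)"

definition transmission_irregular :: "'a set \<Rightarrow> 'a set set \<Rightarrow> bool" where
  "transmission_irregular V E \<longleftrightarrow> inj_on (transmission V E) V"

text \<open>Vertices a..h; P i (1 \<le> i \<le> n) are the internal vertices of the b--d path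
  (P 1 adjacent to b, P n adjacent to d); Q i those of the c--e path
  (Q 1 adjacent to c, Q n adjacent to e).\<close>
datatype vtx = va | vb | vc | vd | ve | vf | vg | vh | P nat | Q nat

definition G3_verts :: "nat \<Rightarrow> vtx set" where
  "G3_verts n = {va, vb, vc, vd, ve, vf, vg, vh} \<union> P ` {1..n} \<union> Q ` {1..n}"

definition G3_edges :: "nat \<Rightarrow> vtx set set" where
  "G3_edges n =
     {{va, vb}, {va, vc}, {vb, vc}, {vd, ve}, {vd, vg}, {ve, vf}, {ve, vh}, {vg, vh}}
   \<union> {{vb, P 1}, {P n, vd}, {vc, Q 1}, {Q n, ve}}
   \<union> {{P i, P (Suc i)} | i. 1 \<le> i \<and> i < n}
   \<union> {{Q i, Q (Suc i)} | i. 1 \<le> i \<and> i < n}"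

end

theory Submission
  imports Defs
begin

lemma walk_last_bound:
  assumes lip: "\<And>x y. {x,y} \<in> E \<Longrightarrow> x \<in> V \<Longrightarrow> y \<in> V \<Longrightarrow> D y \<le> D x + 1"
  shows "is_walk E p \<Longrightarrow> set p \<subseteq> V \<Longrightarrow> D (last p) \<le> D (hd p) + (length p - 1)"
proof (induction p rule: induct_list012)
  case (3 x y rest)
  then have "D y \<le> D x + 1" using lip[of x y] by auto
  with 3 show ?case by auto
qed auto

lemma walk_snoc: "is_walk E p \<Longrightarrow> {last p, v} \<in> E \<Longrightarrow> is_walk E (p @ [v])"
  by (induction E p rule: is_walk.induct) auto

lemma walk_hd: "p \<noteq> [] \<Longrightarrow> hd (p @ q) = hd p" by (cases p) auto

lemma gdist_eq:
  assumes lip: "\<And>x y. {x,y} \<in> E \<Longrightarrow> x \<in> V \<Longrightarrow> y \<in> V \<Longrightarrow> D y \<le> D x + 1"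
    and desc: "\<And>v. v \<in> V \<Longrightarrow> v \<noteq> u \<Longrightarrow> \<exists>w\<in>V. {w,v} \<in> E \<and> D w + 1 = D v"
    and zero: "D u = 0" and uV: "u \<in> V" and vV: "v \<in> V"
  shows "gdist V E u v = D v"
proof -
  have ex: "\<forall>v\<in>V. D v = k \<longrightarrow> (\<exists>p. is_walk E p \<and> set p \<subseteq> V \<and> hd p = u \<and> last p = v \<and> length p = Suc k)" for k
  proof (induction k)
    case 0
    show ?case
    proof (intro ballI impI)
      fix v assume "v \<in> V" "D v = 0"
      then have "v = u" using desc by fastforce
      then show "\<exists>p. is_walk E p \<and> set p \<subseteq> V \<and> hd p = u \<and> last p = v \<and> length p = Suc 0"
        using uV by (intro exI[of _ "[u]"]) auto
    qed
  next
    case (Suc k)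
    show ?case
    proof (intro ballI impI)
      fix v assume v: "v \<in> V" "D v = Suc k"
      then have "v \<noteq> u" using zero by auto
      then obtain w where w: "w \<in> V" "{w,v} \<in> E" "D w + 1 = D v" using desc v by blast
      then obtain p where p: "is_walk E p" "set p \<subseteq> V" "hd p = u" "last p = w" "length p = Suc k"
        using Suc v by auto
      have "p \<noteq> []" using p by auto
      then show "\<exists>p. is_walk E p \<and> set p \<subseteq> V \<and> hd p = u \<and> last p = v \<and> length p = Suc (Suc k)"
        using p w v walk_snoc[of E p v] walk_hd[of p "[v]"]
        by (intro exI[of _ "p @ [v]"]) auto
    qed
  qed
  show ?thesis unfolding gdist_def
  proof (rule Least_equality)
    show "\<exists>p. is_walk E p \<and> set p \<subseteq> V \<and> hd p = u \<and> last p = v \<and> length p = Suc (D v)"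
      using ex vV by blast
  next
    fix k assume "\<exists>p. is_walk E p \<and> set p \<subseteq> V \<and> hd p = u \<and> last p = v \<and> length p = Suc k"
    then obtain p where p: "is_walk E p" "set p \<subseteq> V" "hd p = u" "last p = v" "length p = Suc k" by blast
    have "D (last p) \<le> D (hd p) + (length p - 1)"
      by (rule walk_last_bound[of E V D p]) (use lip p in auto)
    then show "D v \<le> k" using p zero by auto
  qed
qed

definition dd :: "nat \<Rightarrow> nat \<Rightarrow> nat" where "dd i j = (i - j) + (j - i)"
definition cd :: "nat \<Rightarrow> nat \<Rightarrow> nat \<Rightarrow> nat" where "cd n i j = min (dd i j) (2*n+4 - dd i j)"

fun pos :: "nat \<Rightarrow> vtx \<Rightarrow> nat" where
  "pos n vb = 0" | "pos n (P i) = i" | "pos n vd = n+1" | "pos n ve = n+2"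
| "pos n (Q i) = 2*n+3-i" | "pos n vc = 2*n+3" | "pos n _ = 0"

fun isC :: "vtx \<Rightarrow> bool" where
  "isC va = False" | "isC vf = False" | "isC vg = False" | "isC vh = False" | "isC _ = True"

fun dcyc :: "nat \<Rightarrow> vtx \<Rightarrow> nat \<Rightarrow> nat" where
  "dcyc n va q = 1 + min (cd n 0 q) (cd n (2*n+3) q)"
| "dcyc n vf q = 1 + cd n (n+2) q"
| "dcyc n vg q = 1 + cd n (n+1) q"
| "dcyc n vh q = 1 + cd n (n+2) q"
| "dcyc n v q = cd n (pos n v) q"

definition dext :: "nat \<Rightarrow> vtx \<Rightarrow> vtx \<Rightarrow> nat" where
  "dext n u v = (if u = v then 0 else if u = va \<or> v = va then n+3
     else if (u = vf \<and> v = vg) \<or> (u = vg \<and> v = vf) then 3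
     else if (u = vf \<and> v = vh) \<or> (u = vh \<and> v = vf) then 2 else 1)"

definition D :: "nat \<Rightarrow> vtx \<Rightarrow> vtx \<Rightarrow> nat" where
  "D n u v = (if isC v then dcyc n u (pos n v) else if isC u then dcyc n v (pos n u) else dext n u v)"

lemma cd_lip: "s < 2*n+4 \<Longrightarrow> q < 2*n+4 \<Longrightarrow> q' < 2*n+4 \<Longrightarrow>
   (q' = q + 1 \<or> q = q' + 1 \<or> (q = 0 \<and> q' = 2*n+3) \<or> (q' = 0 \<and> q = 2*n+3)) \<Longrightarrow>
   cd n s q' \<le> cd n s q + 1"
  unfolding cd_def dd_def by (elim disjE; simp; linarith)

definition cv :: "nat \<Rightarrow> nat \<Rightarrow> vtx" where
  "cv n q = (if q = 0 then vb else if q \<le> n then P q else if q = n+1 then vd else if q = n+2 then ve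
     else if q \<le> 2*n+2 then Q (2*n+3-q) else vc)"

lemma cv_pos: "q < 2*n+4 \<Longrightarrow> pos n (cv n q) = q"
  unfolding cv_def by auto

lemma cv_isC: "isC (cv n q)"
  unfolding cv_def by auto

lemma verts_eq: "G3_verts n = cv n ` {..<2*n+4} \<union> {va,vf,vg,vh}"
proof
  show "G3_verts n \<subseteq> cv n ` {..<2*n+4} \<union> {va,vf,vg,vh}"
  proof
    fix v assume "v \<in> G3_verts n"
    then consider "v \<in> {va, vb, vc, vd, ve, vf, vg, vh}" | i where "i \<in> {1..n}" "v = P i"
      | i where "i \<in> {1..n}" "v = Q i" unfolding G3_verts_def by auto
    then show "v \<in> cv n ` {..<2*n+4} \<union> {va,vf,vg,vh}"
    proof cases
      case 1
      then show ?thesis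
        apply (elim insertE)
        apply simp_all
        apply (rule image_eqI[of _ _ 0]; simp add: cv_def)
        apply (rule image_eqI[of _ _ "2*n+3"]; simp add: cv_def)
        apply (rule image_eqI[of _ _ "n+1"]; simp add: cv_def)
        apply (rule image_eqI[of _ _ "n+2"]; simp add: cv_def)
        done
    next
      case (2 i)
      then show ?thesis by (intro UnI1 image_eqI[of _ _ i]) (auto simp: cv_def)
    next
      case (3 i)
      then show ?thesis by (intro UnI1 image_eqI[of _ _ "2*n+3-i"]) (auto simp: cv_def)
    qed
  qed
next
  have "cv n q \<in> G3_verts n" if qL: "q < 2*n+4" for q
  proof -
    consider "q = 0" | "q \<noteq> 0 \<and> q \<le> n" | "q = n+1" | "q = n+2" | "q > n+2 \<and> q \<le> 2*n+2" | "q = 2*n+3"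
      using qL by atomize_elim arith
    then show ?thesis
    proof cases
      case 5
      then have "2*n+3-q \<in> {1..n}" by auto
      then show ?thesis using 5 unfolding G3_verts_def cv_def by auto
    qed (auto simp: G3_verts_def cv_def)
  qed
  then show "cv n ` {..<2*n+4} \<union> {va,vf,vg,vh} \<subseteq> G3_verts n"
    unfolding G3_verts_def by auto
qed

lemma isC_pos: "v \<in> G3_verts n \<Longrightarrow> isC v \<Longrightarrow> pos n v < 2*n+4 \<and> cv n (pos n v) = v"
  unfolding G3_verts_def by (auto simp: cv_def)

lemma dcyc_C: "isC u \<Longrightarrow> dcyc n u q = cd n (pos n u) q"
  by (cases u) auto

lemma cd_sym: "cd n i j = cd n j i"
  unfolding cd_def dd_def by (simp add: add.commute)

lemma dcyc_lip: "u \<in> G3_verts n \<Longrightarrow> q < 2*n+4 \<Longrightarrow> q' < 2*n+4 \<Longrightarrow>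
   (q' = q + 1 \<or> q = q' + 1 \<or> (q = 0 \<and> q' = 2*n+3) \<or> (q' = 0 \<and> q = 2*n+3)) \<Longrightarrow>
   dcyc n u q' \<le> dcyc n u q + 1"
proof -
  assume u: "u \<in> G3_verts n" and h: "q < 2*n+4" "q' < 2*n+4"
    "(q' = q + 1 \<or> q = q' + 1 \<or> (q = 0 \<and> q' = 2*n+3) \<or> (q' = 0 \<and> q = 2*n+3))"
  show ?thesis
  proof (cases "isC u")
    case True
    then show ?thesis using isC_pos[OF u True] cd_lip[OF _ h] dcyc_C[OF True] by simp
  next
    case False
    then have "u = va \<or> u = vf \<or> u = vg \<or> u = vh" by (cases u) auto
    then show ?thesis
    proof (elim disjE)
      assume "u = va"
      have m: "min (a'::nat) b' \<le> min a b + 1" if "a' \<le> a + 1" "b' \<le> b + 1" for a b a' b'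
        using that by linarith
      show ?thesis using \<open>u = va\<close> m[OF cd_lip[OF _ h, of 0] cd_lip[OF _ h, of "2*n+3"]] by simp
    qed (use cd_lip[OF _ h, of "n+1"] cd_lip[OF _ h, of "n+2"] in simp_all)
  qed
qed

definition adj :: "nat \<Rightarrow> nat \<Rightarrow> nat \<Rightarrow> bool" where
  "adj n q q' = (q' = q + 1 \<or> q = q' + 1 \<or> (q = 0 \<and> q' = 2*n+3) \<or> (q' = 0 \<and> q = 2*n+3))"

definition XP :: "(vtx \<times> vtx) set" where
  "XP = {(va,vb),(vb,va),(va,vc),(vc,va),(vd,vg),(vg,vd),(ve,vf),(vf,ve),(ve,vh),(vh,ve),(vg,vh),(vh,vg)}"

lemma edge_cases: assumes "{x,y} \<in> G3_edges n" "n \<ge> 1" shows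
   "(isC x \<and> isC y \<and> adj n (pos n x) (pos n y)) \<or> (x,y) \<in> XP"
proof -
  consider "{x,y} \<in> {{va, vb}, {va, vc}, {vb, vc}, {vd, ve}, {vd, vg}, {ve, vf}, {ve, vh}, {vg, vh}}"
    | "{x,y} \<in> {{vb, P 1}, {P n, vd}, {vc, Q 1}, {Q n, ve}}"
    | i where "{x,y} = {P i, P (Suc i)}" "1 \<le> i" "i < n"
    | i where "{x,y} = {Q i, Q (Suc i)}" "1 \<le> i" "i < n"
  proof -
    have "{x,y} \<in> {{va, vb}, {va, vc}, {vb, vc}, {vd, ve}, {vd, vg}, {ve, vf}, {ve, vh}, {vg, vh}}
      \<or> {x,y} \<in> {{vb, P 1}, {P n, vd}, {vc, Q 1}, {Q n, ve}}
      \<or> (\<exists>i. {x,y} = {P i, P (Suc i)} \<and> 1 \<le> i \<and> i < n)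
      \<or> (\<exists>i. {x,y} = {Q i, Q (Suc i)} \<and> 1 \<le> i \<and> i < n)"
      using assms(1) unfolding G3_edges_def Un_iff mem_Collect_eq by metis
    then show ?thesis using that by metis
  qed
  then show ?thesis
  proof cases
    case 1
    then show ?thesis unfolding XP_def adj_def
      by (elim insertE emptyE; simp only: doubleton_eq_iff; elim disjE conjE; simp)
  next
    case 2
    then show ?thesis unfolding XP_def adj_def using assms(2)
      by (elim insertE emptyE; simp only: doubleton_eq_iff; elim disjE conjE; simp)
  next
    case (3 i)
    then show ?thesis unfolding XP_def adj_def
      by (simp only: doubleton_eq_iff; elim disjE conjE; simp)
  next
    case (4 i)
    then show ?thesis unfolding XP_def adj_def
      by (simp only: doubleton_eq_iff; elim disjE conjE; simp; arith)
  qed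
qed

lemma D_lip_XP: assumes "(x,y) \<in> XP" "u \<in> G3_verts n" shows "D n u y \<le> D n u x + 1"
proof (cases "isC u")
  case True
  have s: "pos n u < 2*n+4" using isC_pos[OF assms(2) True] by simp
  show ?thesis using assms(1) True s unfolding XP_def
    by (elim insertE emptyE; simp add: D_def dcyc_C cd_def dd_def; arith)
next
  case False
  then have "u \<in> {va,vf,vg,vh}" by (cases u) auto
  then show ?thesis using assms(1) unfolding XP_def
    by (elim insertE emptyE; simp add: D_def cd_def dd_def dext_def)
qed

lemma D_lip: assumes "n \<ge> 1" "u \<in> G3_verts n" "{x,y} \<in> G3_edges n" "x \<in> G3_verts n" "y \<in> G3_verts n"
  shows "D n u y \<le> D n u x + 1"
proof -
  from edge_cases[OF assms(3,1)] show ?thesis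
  proof
    assume h: "isC x \<and> isC y \<and> adj n (pos n x) (pos n y)"
    then have "pos n x < 2*n+4" "pos n y < 2*n+4" using isC_pos assms(4,5) by auto
    then show ?thesis using h dcyc_lip[OF assms(2), of "pos n x" "pos n y"] unfolding D_def adj_def by simp
  next
    assume "(x,y) \<in> XP" then show ?thesis using D_lip_XP assms(2) by blast
  qed
qed

lemma E_A: "e \<in> {{va, vb}, {va, vc}, {vb, vc}, {vd, ve}, {vd, vg}, {ve, vf}, {ve, vh}, {vg, vh}} \<Longrightarrow> e \<in> G3_edges n"
  unfolding G3_edges_def by (intro UnI1)
lemma E_B: "e \<in> {{vb, P 1}, {P n, vd}, {vc, Q 1}, {Q n, ve}} \<Longrightarrow> e \<in> G3_edges n"
  unfolding G3_edges_def by (rule UnI1, rule UnI1, rule UnI2)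
lemma E_C: "1 \<le> i \<Longrightarrow> i < n \<Longrightarrow> {P i, P (Suc i)} \<in> G3_edges n"
  unfolding G3_edges_def by (rule UnI1, rule UnI2) blast
lemma E_D: "1 \<le> i \<Longrightarrow> i < n \<Longrightarrow> {Q i, Q (Suc i)} \<in> G3_edges n"
  unfolding G3_edges_def by (rule UnI2) blast
lemma E_sym: "{x,y} \<in> G3_edges n \<Longrightarrow> {y,x} \<in> G3_edges n"
  by (simp add: insert_commute)

lemma cv_edge: assumes "q + 1 < 2*n+4" "n \<ge> 1" shows "{cv n q, cv n (q+1)} \<in> G3_edges n"
proof -
  consider "q = 0" | "1 \<le> q \<and> q < n" | "q = n" | "q = n+1" | "q = n+2" | "n+3 \<le> q \<and> q \<le> 2*n+1" | "q = 2*n+2"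
    using assms by atomize_elim arith
  then show ?thesis
  proof cases
    case 1
    have "{vb, P 1} \<in> G3_edges n" by (rule E_B) blast
    then show ?thesis using 1 assms by (simp add: cv_def)
  next
    case 2 then show ?thesis using E_C[of q n] by (simp add: cv_def)
  next
    case 3
    have "{P n, vd} \<in> G3_edges n" by (rule E_B) blast
    then show ?thesis using 3 assms by (simp add: cv_def)
  next
    case 4
    have "{vd, ve} \<in> G3_edges n" by (rule E_A) blast
    then show ?thesis using 4 by (simp add: cv_def)
  next
    case 5
    have "{Q n, ve} \<in> G3_edges n" by (rule E_B) blast
    then show ?thesis using 5 E_sym assms by (simp add: cv_def)
  next
    case 6
    define i where "i = 2*n+2-q"
    have i: "1 \<le> i" "i < n" "2*n+3-q = Suc i" "2*n+3-(q+1) = i" using 6 unfolding i_def by auto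
    have "{Q i, Q (Suc i)} \<in> G3_edges n" using E_D i by blast
    then show ?thesis using 6 i E_sym by (simp add: cv_def)
  next
    case 7
    have "{vc, Q 1} \<in> G3_edges n" by (rule E_B) blast
    then show ?thesis using 7 E_sym assms by (simp add: cv_def)
  qed
qed

lemma cv_edge_wrap: "{cv n (2*n+3), cv n 0} \<in> G3_edges n"
proof -
  have "{vb, vc} \<in> G3_edges n" by (rule E_A) blast
  then show ?thesis using E_sym by (simp add: cv_def)
qed

definition nxt :: "nat \<Rightarrow> nat \<Rightarrow> nat" where "nxt n q = (if q = 2*n+3 then 0 else q+1)"
definition prv :: "nat \<Rightarrow> nat \<Rightarrow> nat" where "prv n q = (if q = 0 then 2*n+3 else q-1)"

lemma nxt_lt: "q < 2*n+4 \<Longrightarrow> nxt n q < 2*n+4" unfolding nxt_def by auto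
lemma prv_lt: "q < 2*n+4 \<Longrightarrow> prv n q < 2*n+4" unfolding prv_def by auto

lemma edge_nxt: "q < 2*n+4 \<Longrightarrow> n \<ge> 1 \<Longrightarrow> {cv n (nxt n q), cv n q} \<in> G3_edges n"
  unfolding nxt_def using cv_edge[of q n] cv_edge_wrap[of n] E_sym by (auto simp: insert_commute)

lemma edge_prv: "q < 2*n+4 \<Longrightarrow> n \<ge> 1 \<Longrightarrow> {cv n (prv n q), cv n q} \<in> G3_edges n"
proof -
  assume a: "q < 2*n+4" "n \<ge> 1"
  show ?thesis
  proof (cases "q = 0")
    case True then show ?thesis using cv_edge_wrap[of n] unfolding prv_def by simp
  next
    case False
    then have "q - 1 + 1 = q" "q - 1 + 1 < 2*n+4" using a by auto
    then show ?thesis using False cv_edge[of "q-1" n] a unfolding prv_def by simp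
  qed
qed

lemma D_cv: "q < 2*n+4 \<Longrightarrow> D n u (cv n q) = dcyc n u q"
  unfolding D_def using cv_isC cv_pos by simp

lemma cd_zero: "s < 2*n+4 \<Longrightarrow> q < 2*n+4 \<Longrightarrow> cd n s q = 0 \<Longrightarrow> s = q"
  unfolding cd_def dd_def by (simp add: min_def split: if_splits)

lemma cd_lo: "dd i j \<le> n+2 \<Longrightarrow> cd n i j = dd i j" unfolding cd_def by simp
lemma cd_hi: "dd i j \<ge> n+2 \<Longrightarrow> cd n i j = 2*n+4 - dd i j" unfolding cd_def by simp

lemma cd_desc: assumes "s < 2*n+4" "q < 2*n+4" "s \<noteq> q"
  shows "cd n s (nxt n q) + 1 = cd n s q \<or> cd n s (prv n q) + 1 = cd n s q"
proof (cases "s < q")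
  case True
  show ?thesis
  proof (cases "q - s \<le> n + 2")
    case True
    then have "prv n q = q - 1" "dd s q = q - s" "dd s (q-1) = q - 1 - s" using \<open>s < q\<close> unfolding prv_def dd_def by auto
    then have "cd n s (prv n q) = q - 1 - s" "cd n s q = q - s"
      using True \<open>s < q\<close> cd_lo[of s q n] cd_lo[of s "q-1" n] by auto
    then show ?thesis using \<open>s < q\<close> by arith
  next
    case False
    show ?thesis
    proof (cases "q = 2*n+3")
      case True
      then have "nxt n q = 0" "dd s q = q - s" "dd s 0 = s" using \<open>s < q\<close> unfolding nxt_def dd_def by auto
      then have "cd n s (nxt n q) = s" "cd n s q = 2*n+4 - (q - s)"
        using False True \<open>s < q\<close> cd_hi[of n s q] cd_lo[of s 0 n] by auto
      then show ?thesis using True \<open>s < q\<close> by arith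
    next
      case False2: False
      then have "nxt n q = q+1" "dd s q = q - s" "dd s (q+1) = q + 1 - s" using \<open>s < q\<close> unfolding nxt_def dd_def by auto
      then have "cd n s (nxt n q) = 2*n+4 - (q+1-s)" "cd n s q = 2*n+4 - (q - s)"
        using False \<open>s < q\<close> cd_hi[of n s q] cd_hi[of n s "q+1"] by auto
      then show ?thesis using False False2 assms \<open>s < q\<close> by arith
    qed
  qed
next
  case False
  then have sq: "q < s" using assms by auto
  show ?thesis
  proof (cases "s - q \<le> n + 2")
    case True
    then have "nxt n q = q + 1" "dd s q = s - q" "dd s (q+1) = s - q - 1" using sq assms unfolding nxt_def dd_def by auto
    then have "cd n s (nxt n q) = s - q - 1" "cd n s q = s - q"
      using True sq cd_lo[of s q n] cd_lo[of s "q+1" n] by auto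
    then show ?thesis using sq by arith
  next
    case False
    show ?thesis
    proof (cases "q = 0")
      case True
      then have "prv n q = 2*n+3" "dd s q = s" "dd s (2*n+3) = 2*n+3-s" using sq assms unfolding prv_def dd_def by auto
      then have "cd n s (prv n q) = 2*n+3-s" "cd n s q = 2*n+4-s"
        using False True sq assms cd_hi[of n s q] cd_lo[of s "2*n+3" n] by auto
      then show ?thesis using sq assms by arith
    next
      case False2: False
      then have "prv n q = q - 1" "dd s q = s - q" "dd s (q-1) = s - q + 1" using sq assms unfolding prv_def dd_def by auto
      then have "cd n s (prv n q) = 2*n+4 - (s-q+1)" "cd n s q = 2*n+4 - (s - q)"
        using False False2 sq assms cd_hi[of n s q] cd_hi[of n s "q-1"] by auto
      then show ?thesis using False sq assms by arith
    qed
  qed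
qed
lemma nxt_adj: "q < 2*n+4 \<Longrightarrow> (nxt n q = q + 1 \<or> q = nxt n q + 1 \<or> (nxt n q = 0 \<and> q = 2*n+3) \<or> (q = 0 \<and> nxt n q = 2*n+3))"
  unfolding nxt_def by auto
lemma prv_adj: "q < 2*n+4 \<Longrightarrow> (prv n q = q + 1 \<or> q = prv n q + 1 \<or> (prv n q = 0 \<and> q = 2*n+3) \<or> (q = 0 \<and> prv n q = 2*n+3))"
  unfolding prv_def by auto

lemma dcyc_desc: assumes "q < 2*n+4" "u \<in> G3_verts n" "u \<noteq> cv n q"
  shows "dcyc n u (nxt n q) + 1 = dcyc n u q \<or> dcyc n u (prv n q) + 1 = dcyc n u q
     \<or> (\<not> isC u \<and> dcyc n u q = 1)"
proof -
  have ln: "dcyc n u q \<le> dcyc n u (nxt n q) + 1"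
    using dcyc_lip[OF assms(2) nxt_lt[OF assms(1)] assms(1)] nxt_adj[OF assms(1)] by auto
  have lp: "dcyc n u q \<le> dcyc n u (prv n q) + 1"
    using dcyc_lip[OF assms(2) prv_lt[OF assms(1)] assms(1)] prv_adj[OF assms(1)] by auto
  have key: "dcyc n u (nxt n q) + 1 \<le> dcyc n u q \<or> dcyc n u (prv n q) + 1 \<le> dcyc n u q
     \<or> (\<not> isC u \<and> dcyc n u q = 1)"
  proof (cases "isC u")
    case True
    have s: "pos n u < 2*n+4" "cv n (pos n u) = u" using isC_pos[OF assms(2) True] by auto
    then have "pos n u \<noteq> q" using assms(3) by auto
    then show ?thesis using cd_desc[OF s(1) assms(1)] dcyc_C[OF True] by auto
  next
    case False
    then have "u \<in> {va,vf,vg,vh}" by (cases u) auto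
    then show ?thesis
    proof (elim insertE emptyE)
      assume u: "u = va"
      show ?thesis
      proof (cases "q = 0 \<or> q = 2*n+3")
        case True
        then show ?thesis using u by (intro disjI2) (auto simp: cd_def dd_def)
      next
        case False
        show ?thesis
        proof (cases "cd n 0 q \<le> cd n (2*n+3) q")
          case True
          have m: "dcyc n va q = 1 + cd n 0 q" using True by (simp add: min_def)
          have "cd n 0 (nxt n q) + 1 = cd n 0 q \<or> cd n 0 (prv n q) + 1 = cd n 0 q"
            using cd_desc[of 0 n q] False assms(1) by auto
          then show ?thesis
          proof (elim disjE)
            assume h: "cd n 0 (nxt n q) + 1 = cd n 0 q"
            have "dcyc n va (nxt n q) \<le> 1 + cd n 0 (nxt n q)" by simp
            then show ?thesis using h m u by (intro disjI1) (hypsubst, linarith)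
          next
            assume h: "cd n 0 (prv n q) + 1 = cd n 0 q"
            have "dcyc n va (prv n q) \<le> 1 + cd n 0 (prv n q)" by simp
            then show ?thesis using h m u by (intro disjI2 disjI1) (hypsubst, linarith)
          qed
        next
          case F2: False
          have m: "dcyc n va q = 1 + cd n (2*n+3) q" using F2 by (simp add: min_def)
          have "cd n (2*n+3) (nxt n q) + 1 = cd n (2*n+3) q \<or> cd n (2*n+3) (prv n q) + 1 = cd n (2*n+3) q"
            using cd_desc[of "2*n+3" n q] False assms(1) by auto
          then show ?thesis
          proof (elim disjE)
            assume h: "cd n (2*n+3) (nxt n q) + 1 = cd n (2*n+3) q"
            have "dcyc n va (nxt n q) \<le> 1 + cd n (2*n+3) (nxt n q)" by simp
            then show ?thesis using h m u by (intro disjI1) (hypsubst, linarith)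
          next
            assume h: "cd n (2*n+3) (prv n q) + 1 = cd n (2*n+3) q"
            have "dcyc n va (prv n q) \<le> 1 + cd n (2*n+3) (prv n q)" by simp
            then show ?thesis using h m u by (intro disjI2 disjI1) (hypsubst, linarith)
          qed
        qed
      qed
    next
      assume u: "u = vf"
      show ?thesis
      proof (cases "q = n+2")
        case True then show ?thesis using u by (intro disjI2) (auto simp: cd_def dd_def)
      next
        case False then show ?thesis using u cd_desc[of "n+2" n q] assms(1) by auto
      qed
    next
      assume u: "u = vg"
      show ?thesis
      proof (cases "q = n+1")
        case True then show ?thesis using u by (intro disjI2) (auto simp: cd_def dd_def)
      next
        case False then show ?thesis using u cd_desc[of "n+1" n q] assms(1) by auto
      qed
    next
      assume u: "u = vh"
      show ?thesis
      proof (cases "q = n+2")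
        case True then show ?thesis using u by (intro disjI2) (auto simp: cd_def dd_def)
      next
        case False then show ?thesis using u cd_desc[of "n+2" n q] assms(1) by auto
      qed
    qed
  qed
  then show ?thesis using ln lp by linarith
qed

lemma desc_cyc: assumes "q < 2*n+4" "u \<in> G3_verts n" "u \<noteq> cv n q"
  shows "D n u (cv n (nxt n q)) + 1 = D n u (cv n q) \<or> D n u (cv n (prv n q)) + 1 = D n u (cv n q)
     \<or> (\<not> isC u \<and> D n u (cv n q) = 1)"
  using dcyc_desc[OF assms] D_cv nxt_lt prv_lt assms(1) by auto

lemma D_zero: "u \<in> G3_verts n \<Longrightarrow> D n u u = 0"
  by (cases "isC u") (auto simp: D_def dcyc_C cd_def dd_def dext_def)

lemma ext_adj: assumes "\<not> isC u" "q < 2*n+4" "D n u (cv n q) = 1" "n \<ge> 1"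
  shows "{u, cv n q} \<in> G3_edges n"
proof -
  have d: "dcyc n u q = 1" using assms(2,3) D_cv by simp
  have u: "u \<in> {va,vf,vg,vh}" using assms(1) by (cases u) auto
  have eab: "{va, vb} \<in> G3_edges n" by (rule E_A) blast
  have eac: "{va, vc} \<in> G3_edges n" by (rule E_A) blast
  have eef: "{ve, vf} \<in> G3_edges n" by (rule E_A) blast
  have edg: "{vd, vg} \<in> G3_edges n" by (rule E_A) blast
  have eeh: "{ve, vh} \<in> G3_edges n" by (rule E_A) blast
  from u show ?thesis
  proof (elim insertE emptyE)
    assume "u = va"
    then have "cd n 0 q = 0 \<or> cd n (2*n+3) q = 0" using d by (simp add: min_def split: if_splits)
    then have "q = 0 \<or> q = 2*n+3" using cd_zero[of 0 n q] cd_zero[of "2*n+3" n q] assms(2) by auto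
    then show ?thesis using \<open>u = va\<close> eab eac by (auto simp: cv_def)
  next
    assume "u = vf"
    then have "q = n+2" using d cd_zero[of "n+2" n q] assms(2) by simp
    then show ?thesis using \<open>u = vf\<close> eef E_sym by (auto simp: cv_def)
  next
    assume "u = vg"
    then have "q = n+1" using d cd_zero[of "n+1" n q] assms(2) by simp
    then show ?thesis using \<open>u = vg\<close> edg E_sym by (auto simp: cv_def)
  next
    assume "u = vh"
    then have "q = n+2" using d cd_zero[of "n+2" n q] assms(2) by simp
    then show ?thesis using \<open>u = vh\<close> eeh E_sym by (auto simp: cv_def)
  qed
qed

lemma desc_ext_arith: assumes "u \<in> G3_verts n"
  shows "(u \<noteq> va \<longrightarrow> D n u vb + 1 = D n u va \<or> D n u vc + 1 = D n u va)
   \<and> (u \<noteq> vf \<longrightarrow> D n u ve + 1 = D n u vf)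
   \<and> (u \<noteq> vg \<longrightarrow> D n u vd + 1 = D n u vg \<or> D n u vh + 1 = D n u vg)
   \<and> (u \<noteq> vh \<longrightarrow> D n u ve + 1 = D n u vh \<or> D n u vg + 1 = D n u vh)"
proof (cases "isC u")
  case True
  have s: "pos n u < 2*n+4" using isC_pos[OF assms True] by simp
  show ?thesis using True s unfolding D_def
    by (simp add: dcyc_C cd_def dd_def; arith)
next
  case False
  then have "u \<in> {va,vf,vg,vh}" by (cases u) auto
  then show ?thesis by (elim insertE emptyE; simp add: D_def cd_def dd_def dext_def)
qed

lemma desc: assumes "n \<ge> 1" "u \<in> G3_verts n" "v \<in> G3_verts n" "v \<noteq> u"
  shows "\<exists>w\<in>G3_verts n. {w,v} \<in> G3_edges n \<and> D n u w + 1 = D n u v"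
proof -
  have V: "cv n q \<in> G3_verts n" if "q < 2*n+4" for q using that verts_eq by auto
  from assms(3) consider q where "q < 2*n+4" "v = cv n q" | "v \<in> {va,vf,vg,vh}"
    unfolding verts_eq by auto
  then show ?thesis
  proof cases
    case (1 q)
    from desc_cyc[OF 1(1) assms(2)] assms(4) 1(2)
    consider "D n u (cv n (nxt n q)) + 1 = D n u (cv n q)" | "D n u (cv n (prv n q)) + 1 = D n u (cv n q)"
      | "\<not> isC u \<and> D n u (cv n q) = 1" by auto
    then show ?thesis
    proof cases
      case 1
      then show ?thesis using \<open>v = cv n q\<close> V nxt_lt \<open>q < 2*n+4\<close> edge_nxt[OF \<open>q < 2*n+4\<close> assms(1)] by blast
    next
      case 2
      then show ?thesis using \<open>v = cv n q\<close> V prv_lt \<open>q < 2*n+4\<close> edge_prv[OF \<open>q < 2*n+4\<close> assms(1)] by blast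
    next
      case 3
      then have "{u, v} \<in> G3_edges n" using ext_adj[of u q n] \<open>q < 2*n+4\<close> \<open>v = cv n q\<close> assms(1) by auto
      then show ?thesis using 3 D_zero[OF assms(2)] assms(2) \<open>v = cv n q\<close> by auto
    qed
  next
    case 2
    have eab: "{va, vb} \<in> G3_edges n" by (rule E_A) blast
    have eac: "{va, vc} \<in> G3_edges n" by (rule E_A) blast
    have eef: "{ve, vf} \<in> G3_edges n" by (rule E_A) blast
    have edg: "{vd, vg} \<in> G3_edges n" by (rule E_A) blast
    have eeh: "{ve, vh} \<in> G3_edges n" by (rule E_A) blast
    have egh: "{vg, vh} \<in> G3_edges n" by (rule E_A) blast
    have inV: "vb \<in> G3_verts n" "vc \<in> G3_verts n" "vd \<in> G3_verts n" "ve \<in> G3_verts n"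
      "vg \<in> G3_verts n" "vh \<in> G3_verts n" unfolding G3_verts_def by auto
    note ar = desc_ext_arith[OF assms(2)]
    from 2 show ?thesis
    proof (elim insertE emptyE)
      assume "v = va" then show ?thesis using ar assms(4) eab eac inV E_sym by metis
    next
      assume "v = vf" then show ?thesis using ar assms(4) eef inV E_sym by metis
    next
      assume "v = vg" then show ?thesis using ar assms(4) edg egh inV E_sym by metis
    next
      assume "v = vh" then show ?thesis using ar assms(4) eeh egh inV E_sym by metis
    qed
  qed
qed

lemma gdist_D: assumes "n \<ge> 1" "u \<in> G3_verts n" "v \<in> G3_verts n"
  shows "gdist (G3_verts n) (G3_edges n) u v = D n u v"
  by (rule gdist_eq[where D="D n u"]) (use D_lip desc D_zero assms in auto)

lemma tri_sum: "(k::nat) \<le> d + 1 \<Longrightarrow> 2 * (\<Sum>i\<in>{0..<k}. d - i) + k*k = 2*k*d + k"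
proof (induction k)
  case 0 then show ?case by simp
next
  case (Suc k)
  then have IH: "2 * (\<Sum>i\<in>{0..<k}. d - i) + k*k = 2*k*d + k" by simp
  have "2 * (\<Sum>i\<in>{0..<Suc k}. d - i) + Suc k * Suc k = 2 * (\<Sum>i\<in>{0..<k}. d - i) + 2*(d - k) + k*k + 2*k + 1"
    by (simp add: algebra_simps)
  also have "\<dots> = 2*k*d + k + 2*(d-k) + 2*k + 1" using IH by simp
  also have "\<dots> = 2 * Suc k * d + Suc k" using Suc.prems by (simp add: algebra_simps)
  finally show ?case .
qed

lemma shift_sum: "(\<Sum>r\<in>{m..<m+k}. (f::nat\<Rightarrow>nat) r) = (\<Sum>i\<in>{0..<k}. f (m + i))"
  using sum.shift_bounds_nat_ivl[of f 0 m k] by (simp add: add.commute)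

lemma cd0_lo: "q \<le> n+2 \<Longrightarrow> cd n 0 q = q" unfolding cd_def dd_def by simp
lemma cd0_hi: "n+2 \<le> q \<Longrightarrow> q \<le> 2*n+4 \<Longrightarrow> cd n 0 q = 2*n+4-q" unfolding cd_def dd_def by simp

lemma sum_rev_id: "(\<Sum>q\<in>{0..<n+2}. (n+1) - q) = (\<Sum>q\<in>{0..<n+2}. q::nat)"
proof -
  have "(\<Sum>q\<in>{0..<n+2}. q) = (\<Sum>i\<in>{0..<n+2}. n + 2 + 0 - Suc i)" by (rule sum.atLeastLessThan_rev)
  also have "\<dots> = (\<Sum>q\<in>{0..<n+2}. (n+1) - q)" by (rule sum.cong) auto
  finally show ?thesis by simp
qed

lemma cd0_sum: "(\<Sum>q\<in>{0..<2*n+4}. cd n 0 q) = (n+2)*(n+2)"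
proof -
  let ?m = "n+2"
  have L: "2*n+4 = ?m + ?m" by simp
  have "(\<Sum>q\<in>{0..<2*n+4}. cd n 0 q) = (\<Sum>q\<in>{0..<?m}. cd n 0 q) + (\<Sum>q\<in>{?m..<?m+?m}. cd n 0 q)"
    unfolding L by (rule sum.atLeastLessThan_concat[symmetric]) simp_all
  also have "(\<Sum>q\<in>{0..<?m}. cd n 0 q) = (\<Sum>q\<in>{0..<?m}. q)"
    by (rule sum.cong) (simp_all add: cd0_lo)
  also have "(\<Sum>q\<in>{?m..<?m+?m}. cd n 0 q) = (\<Sum>i\<in>{0..<?m}. cd n 0 (?m + i))" by (rule shift_sum)
  also have "\<dots> = (\<Sum>i\<in>{0..<?m}. ?m - i)"
    by (rule sum.cong) (simp_all add: cd0_hi)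
  finally have e: "(\<Sum>q\<in>{0..<2*n+4}. cd n 0 q) = (\<Sum>q\<in>{0..<?m}. q) + (\<Sum>i\<in>{0..<?m}. ?m - i)" .
  have t1: "2 * (\<Sum>q\<in>{0..<?m}. (n+1) - q) + ?m * ?m = 2*?m*(n+1) + ?m" by (rule tri_sum) simp
  have t2: "2 * (\<Sum>q\<in>{0..<?m}. ?m - q) + ?m * ?m = 2*?m*?m + ?m" by (rule tri_sum) simp
  have X: "X = (\<Sum>q\<in>{0..<n+2}. q) + (\<Sum>i\<in>{0..<n+2}. (n+2) - i) \<Longrightarrow>
    2 * (\<Sum>q\<in>{0..<n+2}. q) + (n+2) * (n+2) = 2*(n+2)*(n+1) + (n+2) \<Longrightarrow>
    2 * (\<Sum>q\<in>{0..<n+2}. (n+2) - q) + (n+2) * (n+2) = 2*(n+2)*(n+2) + (n+2) \<Longrightarrow> X = (n+2)*(n+2)" for X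
    by (simp add: algebra_simps)
  show ?thesis using X[OF e t1[unfolded sum_rev_id] t2] .
qed

lemma cd_sum: assumes "s < 2*n+4" shows "(\<Sum>q\<in>{0..<2*n+4}. cd n s q) = (n+2)*(n+2)"
proof -
  let ?L = "2*n+4"
  have "(\<Sum>q\<in>{0..<?L}. cd n s q) = (\<Sum>q\<in>{0..<s}. cd n s q) + (\<Sum>q\<in>{s..<?L}. cd n s q)"
    by (rule sum.atLeastLessThan_concat[symmetric]) (use assms in simp_all)
  also have "(\<Sum>q\<in>{s..<?L}. cd n s q) = (\<Sum>q\<in>{s..<s+(?L-s)}. cd n s q)" using assms by simp
  also have "\<dots> = (\<Sum>i\<in>{0..<?L-s}. cd n s (s+i))" by (rule shift_sum)
  also have "\<dots> = (\<Sum>i\<in>{0..<?L-s}. cd n 0 i)" by (rule sum.cong) (simp_all add: cd_def dd_def)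
  also have "(\<Sum>q\<in>{0..<s}. cd n s q) = (\<Sum>q\<in>{0..<s}. cd n 0 ((?L-s) + q))"
    by (rule sum.cong) (use assms in \<open>auto simp: cd_def dd_def\<close>)
  also have "\<dots> = (\<Sum>q\<in>{?L-s..<(?L-s)+s}. cd n 0 q)" by (rule shift_sum[symmetric])
  also have "(?L-s)+s = ?L" using assms by simp
  also have "(\<Sum>q\<in>{?L-s..<?L}. cd n 0 q) + (\<Sum>i\<in>{0..<?L-s}. cd n 0 i) = (\<Sum>q\<in>{0..<?L}. cd n 0 q)"
    using sum.atLeastLessThan_concat[of 0 "?L-s" ?L "cd n 0"] by (simp add: add.commute)
  finally show ?thesis using cd0_sum by simp
qed


lemma a_sum: "(\<Sum>q\<in>{0..<2*n+4}. min (cd n 0 q) (cd n (2*n+3) q)) = (n+2)*(n+1)"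
proof -
  let ?m = "n+2"
  let ?f = "\<lambda>q. min (cd n 0 q) (cd n (2*n+3) q)"
  have L: "2*n+4 = ?m + ?m" by simp
  have "(\<Sum>q\<in>{0..<2*n+4}. ?f q) = (\<Sum>q\<in>{0..<?m}. ?f q) + (\<Sum>q\<in>{?m..<?m+?m}. ?f q)"
    unfolding L by (rule sum.atLeastLessThan_concat[symmetric]) simp_all
  also have "(\<Sum>q\<in>{0..<?m}. ?f q) = (\<Sum>q\<in>{0..<?m}. q)"
    by (rule sum.cong) (auto simp: cd_def dd_def)
  also have "(\<Sum>q\<in>{?m..<?m+?m}. ?f q) = (\<Sum>i\<in>{0..<?m}. ?f (?m + i))" by (rule shift_sum)
  also have "\<dots> = (\<Sum>i\<in>{0..<?m}. (n+1) - i)"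
    by (rule sum.cong) (auto simp: cd_def dd_def)
  also have "\<dots> = (\<Sum>i\<in>{0..<?m}. i)" by (rule sum_rev_id)
  finally have e: "(\<Sum>q\<in>{0..<2*n+4}. ?f q) = 2 * (\<Sum>q\<in>{0..<?m}. q)" by simp
  have t1: "2 * (\<Sum>q\<in>{0..<?m}. (n+1) - q) + ?m * ?m = 2*?m*(n+1) + ?m" by (rule tri_sum) simp
  have X: "X = 2 * Y \<Longrightarrow> 2 * Y + (n+2) * (n+2) = 2*(n+2)*(n+1) + (n+2) \<Longrightarrow> X = (n+2)*(n+1)" for X Y :: nat
    by (simp add: algebra_simps)
  show ?thesis using X[OF e t1[unfolded sum_rev_id]] .
qed

lemma finite_verts: "finite (G3_verts n)"
  unfolding G3_verts_def by simp

lemma card_cyc: "card (cv n ` {0..<2*n+4}) = 2*n+4"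
proof -
  have "inj_on (cv n) {0..<2*n+4}" by (rule inj_on_inverseI[of _ "pos n"]) (simp add: cv_pos)
  then show ?thesis by (simp add: card_image)
qed

lemma verts_eq': "G3_verts n = cv n ` {0..<2*n+4} \<union> {va,vf,vg,vh}"
  using verts_eq[of n] by (simp add: atLeast0LessThan)

lemma trans_split: assumes "n \<ge> 1" "u \<in> G3_verts n"
  shows "transmission (G3_verts n) (G3_edges n) u =
    (\<Sum>q\<in>{0..<2*n+4}. dcyc n u q) + (D n u va + D n u vf + D n u vg + D n u vh)"
proof -
  have "transmission (G3_verts n) (G3_edges n) u = (\<Sum>v\<in>G3_verts n. D n u v)"
    unfolding transmission_def by (rule sum.cong) (use gdist_D[OF assms(1,2)] in auto)
  also have "\<dots> = (\<Sum>v\<in>cv n ` {0..<2*n+4}. D n u v) + (\<Sum>v\<in>{va,vf,vg,vh}. D n u v)"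
    unfolding verts_eq' by (rule sum.union_disjoint) (auto simp: cv_def split: if_splits)
  also have "(\<Sum>v\<in>cv n ` {0..<2*n+4}. D n u v) = (\<Sum>q\<in>{0..<2*n+4}. D n u (cv n q))"
    by (rule sum.reindex_cong[of "cv n"]) (auto intro: inj_on_inverseI[of _ "pos n"] simp: cv_pos)
  also have "\<dots> = (\<Sum>q\<in>{0..<2*n+4}. dcyc n u q)" by (rule sum.cong) (simp_all add: D_cv)
  also have "(\<Sum>v\<in>{va,vf,vg,vh}. D n u v) = D n u va + D n u vf + D n u vg + D n u vh" by simp
  finally show ?thesis .
qed

definition gg :: "nat \<Rightarrow> nat \<Rightarrow> nat" where
  "gg n s = (if s \<le> n+1 then 3*n+9-2*s else 2*s+2-n)"

definition hh :: "nat \<Rightarrow> vtx \<Rightarrow> nat" where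
  "hh n u = (if u = va then 4*n+11 else if u = vf then 3*n+12 else if u = vg then 3*n+11
     else if u = vh then 3*n+10 else gg n (pos n u))"

lemma trans_val: assumes "n \<ge> 1" "u \<in> G3_verts n"
  shows "transmission (G3_verts n) (G3_edges n) u = (n+2)*(n+2) + hh n u"
proof (cases "isC u")
  case True
  have s: "pos n u < 2*n+4" using isC_pos[OF assms(2) True] by simp
  have "(\<Sum>q\<in>{0..<2*n+4}. dcyc n u q) = (n+2)*(n+2)"
    using cd_sum[OF s] by (simp add: dcyc_C[OF True])
  moreover have "D n u va + D n u vf + D n u vg + D n u vh = gg n (pos n u)"
    using True s unfolding D_def gg_def by (simp add: cd_def dd_def; arith)
  moreover have "hh n u = gg n (pos n u)" using True unfolding hh_def by auto
  ultimately show ?thesis using trans_split[OF assms] by simp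
next
  case False
  then have u: "u \<in> {va,vf,vg,vh}" by (cases u) auto
  have sa: "(\<Sum>q\<in>{0..<2*n+4}. dcyc n va q) = (2*n+4) + (n+2)*(n+1)"
    using a_sum[of n] by (simp add: sum_Suc)
  have sf: "(\<Sum>q\<in>{0..<2*n+4}. dcyc n vf q) = (2*n+4) + (n+2)*(n+2)"
    using cd_sum[of "n+2" n] by (simp add: sum_Suc)
  have sg: "(\<Sum>q\<in>{0..<2*n+4}. dcyc n vg q) = (2*n+4) + (n+2)*(n+2)"
    using cd_sum[of "n+1" n] by (simp add: sum_Suc)
  have sh: "(\<Sum>q\<in>{0..<2*n+4}. dcyc n vh q) = (2*n+4) + (n+2)*(n+2)"
    using cd_sum[of "n+2" n] by (simp add: sum_Suc)
  from u show ?thesis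
  proof (elim insertE emptyE)
    assume "u = va"
    then show ?thesis using trans_split[OF assms] sa
      by (simp add: D_def hh_def dext_def algebra_simps)
  next
    assume "u = vf"
    then show ?thesis using trans_split[OF assms] sf
      by (simp add: D_def hh_def dext_def algebra_simps)
  next
    assume "u = vg"
    then show ?thesis using trans_split[OF assms] sg
      by (simp add: D_def hh_def dext_def algebra_simps)
  next
    assume "u = vh"
    then show ?thesis using trans_split[OF assms] sh
      by (simp add: D_def hh_def dext_def algebra_simps)
  qed
qed


lemma hh_range: assumes "u \<in> G3_verts n" shows "(n+6 \<le> hh n u \<and> hh n u \<le> 3*n+12) \<or> hh n u = 4*n+11"
proof (cases "isC u")
  case True
  have s: "pos n u < 2*n+4" using isC_pos[OF assms True] by simp
  have "u \<noteq> va" "u \<noteq> vf" "u \<noteq> vg" "u \<noteq> vh" using True by auto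
  then show ?thesis using s unfolding hh_def gg_def by auto
next
  case False
  then have "u \<in> {va,vf,vg,vh}" by (cases u) auto
  then show ?thesis unfolding hh_def by auto
qed

lemma hh_cv: "q < 2*n+4 \<Longrightarrow> hh n (cv n q) = gg n q"
  using cv_isC[of n q] cv_pos[of q n] unfolding hh_def by (auto simp del: isC.simps) (auto simp: cv_def split: if_splits)

lemma hh_surj: assumes "n \<ge> 2" "(n+6 \<le> y \<and> y \<le> 3*n+12) \<or> y = 4*n+11"
  shows "\<exists>u\<in>G3_verts n. hh n u = y"
proof -
  have V: "cv n q \<in> G3_verts n" if "q < 2*n+4" for q using that verts_eq by auto
  have inV: "va \<in> G3_verts n" "vf \<in> G3_verts n" "vg \<in> G3_verts n" "vh \<in> G3_verts n"
    unfolding G3_verts_def by auto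
  consider "y = 4*n+11" | "y = 3*n+12" | "y = 3*n+11" | "y = 3*n+10" | "n+6 \<le> y \<and> y \<le> 3*n+9"
    using assms by atomize_elim arith
  then show ?thesis
  proof cases
    case 1 then show ?thesis using inV by (intro bexI[of _ va]) (auto simp: hh_def)
  next
    case 2 then show ?thesis using inV by (intro bexI[of _ vf]) (auto simp: hh_def)
  next
    case 3 then show ?thesis using inV by (intro bexI[of _ vg]) (auto simp: hh_def)
  next
    case 4 then show ?thesis using inV by (intro bexI[of _ vh]) (auto simp: hh_def)
  next
    case 5
    show ?thesis
    proof (cases "odd (y + n)")
      case True
      define q where "q = (3*n+9-y) div 2"
      have "q \<le> n+1" "gg n q = y" using 5 True unfolding q_def gg_def by (auto elim!: oddE; arith)+
      then show ?thesis using V[of q] hh_cv[of q n] by (intro bexI[of _ "cv n q"]) auto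
    next
      case False
      define q where "q = (y+n-2) div 2"
      have "n+2 \<le> q" "q < 2*n+4" "gg n q = y" using 5 False unfolding q_def gg_def by (auto elim!: evenE; arith)+
      then show ?thesis using V[of q] hh_cv[of q n] by (intro bexI[of _ "cv n q"]) auto
    qed
  qed
qed


theorem proposition3:
  fixes n :: nat
  assumes "n \<ge> 2"
  shows "transmission_irregular (G3_verts n) (G3_edges n)
    \<and> transmission (G3_verts n) (G3_edges n) ` G3_verts n
        = {n^2 + 5*n + 10 .. n^2 + 7*n + 16} \<union> {n^2 + 8*n + 15}"
proof -
  let ?V = "G3_verts n" and ?T = "transmission (G3_verts n) (G3_edges n)"
  let ?S = "{n^2 + 5*n + 10 .. n^2 + 7*n + 16} \<union> {n^2 + 8*n + 15}"
  have n1: "n \<ge> 1" using assms by simp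
  have sq: "(n+2)*(n+2) = n^2 + 4*n + 4" by (simp add: power2_eq_square algebra_simps)
  have img: "?T ` ?V = ?S"
  proof
    show "?T ` ?V \<subseteq> ?S"
    proof
      fix x assume "x \<in> ?T ` ?V"
      then obtain u where u: "u \<in> ?V" "x = ?T u" by blast
      then have "x = n^2 + 4*n + 4 + hh n u" using trans_val[OF n1 u(1)] sq by simp
      then show "x \<in> ?S" using hh_range[OF u(1)] by auto
    qed
  next
    show "?S \<subseteq> ?T ` ?V"
    proof
      fix x assume x: "x \<in> ?S"
      define y where "y = x - (n^2 + 4*n + 4)"
      have xy: "x = n^2 + 4*n + 4 + y" and yr: "(n+6 \<le> y \<and> y \<le> 3*n+12) \<or> y = 4*n+11"
        using x unfolding y_def by auto
      obtain u where u: "u \<in> ?V" "hh n u = y" using hh_surj[OF assms yr] by blast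
      have "?T u = x" using trans_val[OF n1 u(1)] sq u(2) xy by simp
      then show "x \<in> ?T ` ?V" using u(1) by blast
    qed
  qed
  have cV: "card ?V = 2*n+8"
  proof -
    have "card ?V = card (cv n ` {0..<2*n+4}) + card {va,vf,vg,vh}"
      unfolding verts_eq' by (rule card_Un_disjoint) (auto simp: cv_def split: if_splits)
    then show ?thesis using card_cyc[of n] by simp
  qed
  have cS: "card ?S = 2*n+8"
  proof -
    have "n^2 + 8*n + 15 \<notin> {n^2 + 5*n + 10 .. n^2 + 7*n + 16}" using assms by auto
    then have "card ?S = card {n^2 + 5*n + 10 .. n^2 + 7*n + 16} + 1" by simp
    then show ?thesis by simp
  qed
  have "inj_on ?T ?V"
    by (rule eq_card_imp_inj_on) (use img cV cS finite_verts in auto)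
  then show ?thesis using img unfolding transmission_irregular_def by simp
qed


end
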